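(* Let $N$ be a Poisson process on $[0,\infty)$ with intensity $\lambda>0$, with points $0<X_1<X_2<\cdots$, and let $\epsilon>0$. For every integer $n\ge0$ and every $s\ge0$, $$\mathbb{E}\left[e^{-sU_n}\right]=\frac{\lambda^n}{\left(\lambda+s\,e^{(\lambda+s)\epsilon}\right)^n}.$$
   Context: A cluster is a maximal set of consecutive points $X_j,\dots,X_k$ with $X_{l+1}-X_l\le\epsilon$ for $j\le l<k$. Clusters are numbered from left to right; $A_i$ is the first point of the $i$-th cluster. $\Delta A_i=A_{i+1}-A_i$, and $U_n=\sum_{k=1}^n\Delta A_k=A_{n+1}-A_1$ (so $U_0=0$). *)

theory Defs
  imports "HOL-Probability.Probability"
begin

text \<open>Poisson process on [0,oo) with intensity l, given by i.i.d. Exp(l) inter-arrival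
  times E 0, E 1, ...; the points are X k = E 0 + ... + E (k-1) for k >= 1.\<close>

definition poisson_interarrivals ::
  "'a measure \<Rightarrow> real \<Rightarrow> (nat \<Rightarrow> 'a \<Rightarrow> real) \<Rightarrow> bool" where
  "poisson_interarrivals M l E \<longleftrightarrow>
     prob_space.indep_vars M (\<lambda>_. borel) E UNIV \<and>
     (\<forall>i. distributed M lborel (E i) (exponential_density l))"

definition pp_points :: "(nat \<Rightarrow> 'a \<Rightarrow> real) \<Rightarrow> 'a \<Rightarrow> nat \<Rightarrow> real" where
  "pp_points E \<omega> k = (\<Sum>i<k. E i \<omega>)"

definition cluster_starts :: "(nat \<Rightarrow> real) \<Rightarrow> real \<Rightarrow> nat set" where
  "cluster_starts X \<epsilon> = {k. k = 1 \<or> (k \<ge> 2 \<and> X k - X (k - 1) > \<epsilon>)}"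

definition cluster_first :: "(nat \<Rightarrow> real) \<Rightarrow> real \<Rightarrow> nat \<Rightarrow> real" where
  "cluster_first X \<epsilon> i = X (enumerate (cluster_starts X \<epsilon>) (i - 1))"

definition cluster_U :: "(nat \<Rightarrow> real) \<Rightarrow> real \<Rightarrow> nat \<Rightarrow> real" where
  "cluster_U X \<epsilon> n = cluster_first X \<epsilon> (n + 1) - cluster_first X \<epsilon> 1"

end

theory Submission
  imports Defs "HOL-Real_Asymp.Real_Asymp"
begin


lemma enum_card:
  fixes S :: "nat set"
  shows "card (S \<inter> {..<m}) = n \<Longrightarrow> m \<in> S \<Longrightarrow> enumerate S n = m"
proof (induction n arbitrary: S)
  case 0
  then have "S \<inter> {..<m} = {}" by simp
  then have "\<forall>y\<in>S. m \<le> y" by auto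
  then show ?case using 0 unfolding enumerate_0 by (auto intro!: Least_equality)
next
  case (Suc n)
  define L where "L = (LEAST x. x \<in> S)"
  from Suc.prems have "S \<inter> {..<m} \<noteq> {}" by auto
  then obtain y where y: "y \<in> S" "y < m" by auto
  have LS: "L \<in> S" using y unfolding L_def by (meson LeastI)
  have "L \<le> y" using y unfolding L_def by (simp add: Least_le)
  with y have Lm: "L < m" by simp
  have "(S - {L}) \<inter> {..<m} = (S \<inter> {..<m}) - {L}" by auto
  then have "card ((S - {L}) \<inter> {..<m}) = n"
    using Suc.prems LS Lm by (simp add: card_Diff_singleton)
  moreover have "m \<in> S - {L}" using Suc.prems Lm by auto
  ultimately have "enumerate (S - {L}) n = m" by (rule Suc.IH)
  then show ?case by (simp add: L_def enumerate_Suc)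
qed

lemma enum_none:
  fixes S :: "nat set"
  shows "\<forall>m\<in>S. card (S \<inter> {..<m}) \<noteq> n \<Longrightarrow> enumerate S n = (LEAST x. x \<in> ({}::nat set))"
proof (induction n arbitrary: S)
  case 0
  have "S = {}"
  proof (rule ccontr)
    assume "S \<noteq> {}"
    then obtain y where "y \<in> S" by auto
    then have L: "(LEAST x. x \<in> S) \<in> S" by (meson LeastI)
    have "S \<inter> {..<(LEAST x. x \<in> S)} = {}" using not_less_Least by auto
    then show False using 0 L by force
  qed
  then show ?case by (simp add: enumerate_0)
next
  case (Suc n)
  show ?case
  proof (cases "S = {}")
    case True
    then show ?thesis using Suc.IH[of "{}"] by (simp add: enumerate_Suc)
  next
    case False
    define L where "L = (LEAST x. x \<in> S)"
    from False obtain y where "y \<in> S" by auto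
    then have LS: "L \<in> S" unfolding L_def by (meson LeastI)
    have Lle: "\<And>z. z \<in> S \<Longrightarrow> L \<le> z" unfolding L_def by (simp add: Least_le)
    have "\<forall>m\<in>S - {L}. card ((S - {L}) \<inter> {..<m}) \<noteq> n"
    proof
      fix m assume m: "m \<in> S - {L}"
      then have Lm: "L < m" using Lle by force
      have "(S - {L}) \<inter> {..<m} = (S \<inter> {..<m}) - {L}" by auto
      then have "card ((S - {L}) \<inter> {..<m}) = card (S \<inter> {..<m}) - 1"
        using LS Lm by (simp add: card_Diff_singleton)
      moreover have "card (S \<inter> {..<m}) \<noteq> Suc n" using Suc.prems m by auto
      moreover have "card (S \<inter> {..<m}) \<ge> 1"
        using LS Lm by (metis One_nat_def Suc_leI card_gt_0_iff finite_Int finite_lessThan IntI lessThan_iff empty_iff)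
      ultimately show "card ((S - {L}) \<inter> {..<m}) \<noteq> n" by linarith
    qed
    then have "enumerate (S - {L}) n = (LEAST x. x \<in> ({}::nat set))" by (rule Suc.IH)
    then show ?thesis by (simp add: L_def enumerate_Suc)
  qed
qed

definition gg :: "real \<Rightarrow> real \<Rightarrow> real \<Rightarrow> real" where
  "gg e s y = (if e < y then exp (- s * y) else 0)"
definition hh :: "real \<Rightarrow> real \<Rightarrow> real \<Rightarrow> real" where
  "hh e s y = (if e < y then 0 else exp (- s * y))"

fun w :: "real \<Rightarrow> real \<Rightarrow> (nat \<Rightarrow> real) \<Rightarrow> nat \<Rightarrow> nat \<Rightarrow> real" where
  "w e s x 0 r = (if r = 0 then 1 else 0)"
| "w e s x (Suc j) 0 = w e s x j 0 * hh e s (x (Suc j))"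
| "w e s x (Suc j) (Suc r) = w e s x j (Suc r) * hh e s (x (Suc j)) + w e s x j r * gg e s (x (Suc j))"

lemma w_closed:
  "w e s x j r = (if card {i\<in>{1..j}. e < x i} = r then exp (- s * (\<Sum>i\<in>{1..j}. x i)) else 0)"
proof (induction j arbitrary: r)
  case 0
  then show ?case by simp
next
  case (Suc j)
  let ?C = "{i\<in>{1..j}. e < x i}"
  have fin: "finite ?C" by simp
  have nin: "Suc j \<notin> ?C" by simp
  have C: "{i\<in>{1..Suc j}. e < x i} = (if e < x (Suc j) then insert (Suc j) ?C else ?C)"
    by (auto simp: le_Suc_eq)
  have sm: "(\<Sum>i\<in>{1..Suc j}. x i) = (\<Sum>i\<in>{1..j}. x i) + x (Suc j)"
    by simp
  have ex: "exp (- s * (\<Sum>i\<in>{1..Suc j}. x i)) = exp (- s * (\<Sum>i\<in>{1..j}. x i)) * exp (- s * x (Suc j))"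
    unfolding sm by (simp add: distrib_left exp_add[symmetric])
  show ?case
  proof (cases r)
    case 0
    then show ?thesis using Suc.IH[of 0] C fin nin ex
      by (auto simp: hh_def)
  next
    case (Suc r')
    then show ?thesis using Suc.IH[of r] Suc.IH[of r'] C fin nin ex
      by (auto simp: hh_def gg_def)
  qed
qed


lemma cs_eq:
  fixes x :: "nat \<Rightarrow> real"
  shows "cluster_starts (\<lambda>k. \<Sum>i<k. x i) e = {k. k = 1 \<or> (k \<ge> 2 \<and> e < x (k - 1))}"
proof -
  have "\<And>k. k \<ge> 2 \<Longrightarrow> (\<Sum>i<k. x i) - (\<Sum>i<k-1. x i) = x (k - 1)"
  proof -
    fix k :: nat assume "k \<ge> 2"
    then have "k = Suc (k - 1)" by simp
    then have "(\<Sum>i<k. x i) = (\<Sum>i<Suc (k-1). x i)" by simp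
    then show "(\<Sum>i<k. x i) - (\<Sum>i<k-1. x i) = x (k - 1)" by simp
  qed
  then show ?thesis unfolding cluster_starts_def by auto
qed

lemma cs_inter:
  fixes x :: "nat \<Rightarrow> real"
  shows   "cluster_starts (\<lambda>k. \<Sum>i<k. x i) e \<inter> {..<Suc (Suc j)} = insert 1 (Suc ` {i\<in>{1..j}. e < x i})"
  unfolding cs_eq
proof (intro set_eqI iffI)
  fix k assume "k \<in> {k. k = 1 \<or> 2 \<le> k \<and> e < x (k - 1)} \<inter> {..<Suc (Suc j)}"
  then show "k \<in> insert 1 (Suc ` {i \<in> {1..j}. e < x i})"
    by (auto intro!: image_eqI[of _ _ "k - 1"])
next
  fix k assume "k \<in> insert 1 (Suc ` {i \<in> {1..j}. e < x i})"
  then show "k \<in> {k. k = 1 \<or> 2 \<le> k \<and> e < x (k - 1)} \<inter> {..<Suc (Suc j)}"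
    by auto
qed

lemma cs_card:
  fixes x :: "nat \<Rightarrow> real"
  shows   "card (cluster_starts (\<lambda>k. \<Sum>i<k. x i) e \<inter> {..<Suc (Suc j)}) = Suc (card {i\<in>{1..j}. e < x i})"
  unfolding cs_inter by (subst card_insert_disjoint) (auto simp: card_image)

lemma cs_enum0:
  fixes x :: "nat \<Rightarrow> real"
  shows "enumerate (cluster_starts (\<lambda>k. \<Sum>i<k. x i) e) 0 = 1"
  by (rule enum_card) (auto simp: cs_eq)

lemma sum_shift1:
  fixes x :: "nat \<Rightarrow> real"
  shows "(\<Sum>i<Suc (Suc j). x i) - (\<Sum>i<1. x i) = (\<Sum>i\<in>{1..Suc j}. x i)"
proof -
  have "{..<Suc (Suc j)} = insert 0 {1..Suc j}" by auto
  then show ?thesis by simp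
qed

lemma U_good:
  fixes x :: "nat \<Rightarrow> real"
  assumes "n \<ge> 1" "card {i\<in>{1..j}. e < x i} = n - 1" "e < x (Suc j)"
  shows "cluster_U (\<lambda>k. \<Sum>i<k. x i) e n = (\<Sum>i\<in>{1..Suc j}. x i)"
proof -
  have "enumerate (cluster_starts (\<lambda>k. \<Sum>i<k. x i) e) n = Suc (Suc j)"
    using enum_card[of "cluster_starts (\<lambda>k. \<Sum>i<k. x i) e" "Suc (Suc j)" n] assms cs_card[of x e j]
    by (auto simp: cs_eq)
  then show ?thesis
    unfolding cluster_U_def cluster_first_def using cs_enum0[of x e] sum_shift1[of x j]
    by simp
qed

lemma U_unique:
  fixes x :: "nat \<Rightarrow> real"
  assumes "n \<ge> 1" "card {i\<in>{1..j}. e < x i} = n - 1" "e < x (Suc j)"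
    "card {i\<in>{1..j'}. e < x i} = n - 1" "e < x (Suc j')"
  shows "j = j'"
proof -
  have "enumerate (cluster_starts (\<lambda>k. \<Sum>i<k. x i) e) n = Suc (Suc j)"
    using enum_card[of "cluster_starts (\<lambda>k. \<Sum>i<k. x i) e" "Suc (Suc j)" n] assms cs_card[of x e j]
    by (auto simp: cs_eq)
  moreover have "enumerate (cluster_starts (\<lambda>k. \<Sum>i<k. x i) e) n = Suc (Suc j')"
    using enum_card[of "cluster_starts (\<lambda>k. \<Sum>i<k. x i) e" "Suc (Suc j')" n] assms cs_card[of x e j']
    by (auto simp: cs_eq)
  ultimately show ?thesis by simp
qed

lemma U_bad:
  fixes x :: "nat \<Rightarrow> real"
  assumes "n \<ge> 1" "\<not> (\<exists>j. card {i\<in>{1..j}. e < x i} = n - 1 \<and> e < x (Suc j))"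
  shows "cluster_U (\<lambda>k. \<Sum>i<k. x i) e n =
     (\<Sum>i<(LEAST x. x \<in> ({}::nat set)). x i) - x 0"
proof -
  let ?S = "cluster_starts (\<lambda>k. \<Sum>i<k. x i) e"
  have "\<forall>m\<in>?S. card (?S \<inter> {..<m}) \<noteq> n"
  proof
    fix m assume m: "m \<in> ?S"
    show "card (?S \<inter> {..<m}) \<noteq> n"
    proof (cases "m = 1")
      case True
      then have "?S \<inter> {..<m} = {}" by (auto simp: cs_eq)
      then show ?thesis using assms by simp
    next
      case False
      with m have m2: "m \<ge> 2" "e < x (m - 1)" by (auto simp: cs_eq)
      then obtain j where j: "m = Suc (Suc j)" by (metis add_2_eq_Suc le_Suc_ex)
      show ?thesis using assms m2 unfolding j cs_card by auto
    qed
  qed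
  then have "enumerate ?S n = (LEAST x. x \<in> ({}::nat set))" by (rule enum_none)
  then show ?thesis
    unfolding cluster_U_def cluster_first_def using cs_enum0[of x e] by simp
qed



lemma (in prob_space) indep_var_nn_integral:
  fixes X Y :: "'a \<Rightarrow> real"
  assumes ind: "indep_var borel X borel Y" and nX: "\<And>\<omega>. 0 \<le> X \<omega>" and nY: "\<And>\<omega>. 0 \<le> Y \<omega>"
  shows "(\<integral>\<^sup>+\<omega>. ennreal (X \<omega> * Y \<omega>) \<partial>M) = (\<integral>\<^sup>+\<omega>. X \<omega> \<partial>M) * (\<integral>\<^sup>+\<omega>. Y \<omega> \<partial>M)"
proof -
  have cb: "case_bool borel borel = (\<lambda>_::bool. (borel :: real measure))"
    by (rule ext) (simp split: bool.split)
  have iv: "indep_vars (\<lambda>_. borel) (case_bool X Y) UNIV"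
    using ind unfolding indep_var_def cb .
  have iv2: "indep_vars (\<lambda>_. borel) (\<lambda>i \<omega>. ennreal (case_bool X Y i \<omega>)) UNIV"
    by (rule indep_vars_compose2[OF iv]) simp
  have "(\<integral>\<^sup>+\<omega>. (\<Prod>i\<in>UNIV. ennreal (case_bool X Y i \<omega>)) \<partial>M) = (\<Prod>i\<in>UNIV. \<integral>\<^sup>+\<omega>. ennreal (case_bool X Y i \<omega>) \<partial>M)"
    by (rule indep_vars_nn_integral[OF _ iv2]) auto
  then show ?thesis by (simp add: UNIV_bool mult.commute ennreal_mult nX nY)
qed

lemma w_nonneg: "0 \<le> w e s x j r"
  by (simp add: w_closed)

lemma gg_nonneg: "0 \<le> gg e s y" and hh_nonneg: "0 \<le> hh e s y"
  by (auto simp: gg_def hh_def)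

lemma w_cong: "(\<And>i. i \<in> {1..j} \<Longrightarrow> x i = y i) \<Longrightarrow> w e s x j r = w e s y j r"
  unfolding w_closed by (simp cong: conj_cong)

lemma w_meas:
  fixes Y :: "'b \<Rightarrow> nat \<Rightarrow> real"
  assumes "\<And>i. i \<in> {1..J} \<Longrightarrow> (\<lambda>\<omega>. Y \<omega> i) \<in> borel_measurable N"
  shows "j \<le> J \<Longrightarrow> (\<lambda>\<omega>. w e s (Y \<omega>) j r) \<in> borel_measurable N"
proof (induction j arbitrary: r)
  case 0
  then show ?case by simp
next
  case (Suc j)
  have m: "(\<lambda>\<omega>. Y \<omega> (Suc j)) \<in> borel_measurable N" using assms Suc.prems by simp
  have hm: "(\<lambda>\<omega>. hh e s (Y \<omega> (Suc j))) \<in> borel_measurable N"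
    unfolding hh_def using m by measurable
  have gm: "(\<lambda>\<omega>. gg e s (Y \<omega> (Suc j))) \<in> borel_measurable N"
    unfolding gg_def using m by measurable
  show ?case
  proof (cases r)
    case 0
    then show ?thesis using Suc.IH[of 0] Suc.prems hm by simp
  next
    case (Suc r')
    then show ?thesis using Suc.IH[of r] Suc.IH[of r'] \<open>Suc j \<le> J\<close> hm gm by simp
  qed
qed

fun q :: "real \<Rightarrow> real \<Rightarrow> nat \<Rightarrow> nat \<Rightarrow> real" where
  "q a b 0 r = (if r = 0 then 1 else 0)"
| "q a b (Suc j) 0 = a * q a b j 0"
| "q a b (Suc j) (Suc r) = a * q a b j (Suc r) + b * q a b j r"

lemma q_nonneg: "0 \<le> a \<Longrightarrow> 0 \<le> b \<Longrightarrow> 0 \<le> q a b j r"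
  by (induction a b j r rule: q.induct) auto

locale ppsetup = prob_space M for M :: "'a measure" +
  fixes l e :: real and E :: "nat \<Rightarrow> 'a \<Rightarrow> real"
  assumes lpos: "l > 0" and epos: "e > 0" and pia: "poisson_interarrivals M l E"
begin

lemma indE: "indep_vars (\<lambda>_. borel) E UNIV"
  using pia unfolding poisson_interarrivals_def by simp

lemma distE: "distributed M lborel (E i) (exponential_density l)"
  using pia unfolding poisson_interarrivals_def by simp

lemma E_meas[measurable]: "E i \<in> borel_measurable M"
  using distributed_measurable[OF distE[of i]] by simp

lemma W_meas[measurable]: "(\<lambda>\<omega>. w e s (\<lambda>i. E i \<omega>) j r) \<in> borel_measurable M"
  by (rule w_meas[of j]) auto

lemma W_indep:
  assumes "\<phi> \<in> borel_measurable borel"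
  shows "indep_var borel (\<lambda>\<omega>. w e s (\<lambda>i. E i \<omega>) j r) borel (\<lambda>\<omega>. \<phi> (E (Suc j) \<omega>))"
proof -
  have iv: "indep_var (PiM {1..j} (\<lambda>_. borel)) (\<lambda>\<omega>. restrict (\<lambda>i. E i \<omega>) {1..j})
                     (PiM {Suc j} (\<lambda>_. borel)) (\<lambda>\<omega>. restrict (\<lambda>i. E i \<omega>) {Suc j})"
    by (rule indep_var_restrict[OF indE]) auto
  have m1: "(\<lambda>f. w e s f j r) \<in> borel_measurable (PiM {1..j} (\<lambda>_. borel))"
    by (rule w_meas[of j]) auto
  have m2: "(\<lambda>f. \<phi> (f (Suc j))) \<in> borel_measurable (PiM {Suc j} (\<lambda>_. borel))"
    using assms by measurable
  have "indep_var borel ((\<lambda>f. w e s f j r) \<circ> (\<lambda>\<omega>. restrict (\<lambda>i. E i \<omega>) {1..j}))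
                  borel ((\<lambda>f. \<phi> (f (Suc j))) \<circ> (\<lambda>\<omega>. restrict (\<lambda>i. E i \<omega>) {Suc j}))"
    by (rule indep_var_compose[OF iv m1 m2])
  moreover have "((\<lambda>f. w e s f j r) \<circ> (\<lambda>\<omega>. restrict (\<lambda>i. E i \<omega>) {1..j})) = (\<lambda>\<omega>. w e s (\<lambda>i. E i \<omega>) j r)"
    by (rule ext) (simp, rule w_cong, simp)
  moreover have "((\<lambda>f. \<phi> (f (Suc j))) \<circ> (\<lambda>\<omega>. restrict (\<lambda>i. E i \<omega>) {Suc j})) = (\<lambda>\<omega>. \<phi> (E (Suc j) \<omega>))"
    by (rule ext) simp
  ultimately show ?thesis by simp
qed

definition "Ah s = (\<integral>\<^sup>+y. ennreal (exponential_density l y) * ennreal (hh e s y) \<partial>lborel)"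
definition "Ag s = (\<integral>\<^sup>+y. ennreal (exponential_density l y) * ennreal (gg e s y) \<partial>lborel)"

lemma int_hh: "(\<integral>\<^sup>+\<omega>. ennreal (hh e s (E k \<omega>)) \<partial>M) = Ah s"
  unfolding Ah_def by (rule distributed_nn_integral[OF distE, symmetric]) (simp add: hh_def)

lemma int_gg: "(\<integral>\<^sup>+\<omega>. ennreal (gg e s (E k \<omega>)) \<partial>M) = Ag s"
  unfolding Ag_def by (rule distributed_nn_integral[OF distE, symmetric]) (simp add: gg_def)

lemma hh_meas[measurable]: "(\<lambda>\<omega>. hh e s (E k \<omega>)) \<in> borel_measurable M"
  unfolding hh_def by measurable
lemma gg_meas[measurable]: "(\<lambda>\<omega>. gg e s (E k \<omega>)) \<in> borel_measurable M"
  unfolding gg_def by measurable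

lemma Q_eq:
  assumes A: "Ah s = ennreal a" and B: "Ag s = ennreal b" and a0: "0 \<le> a" and b0: "0 \<le> b"
  shows "(\<integral>\<^sup>+\<omega>. ennreal (w e s (\<lambda>i. E i \<omega>) j r) \<partial>M) = ennreal (q a b j r)"
proof (induction j arbitrary: r)
  case 0
  then show ?case by (simp add: emeasure_space_1)
next
  case (Suc j)
  have H: "(\<integral>\<^sup>+\<omega>. ennreal (w e s (\<lambda>i. E i \<omega>) j r' * hh e s (E (Suc j) \<omega>)) \<partial>M) = ennreal (a * q a b j r')" for r'
  proof -
    have "(\<integral>\<^sup>+\<omega>. ennreal (w e s (\<lambda>i. E i \<omega>) j r' * hh e s (E (Suc j) \<omega>)) \<partial>M)
       = (\<integral>\<^sup>+\<omega>. w e s (\<lambda>i. E i \<omega>) j r' \<partial>M) * (\<integral>\<^sup>+\<omega>. hh e s (E (Suc j) \<omega>) \<partial>M)"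
      by (rule indep_var_nn_integral[OF W_indep]) (auto simp: w_nonneg hh_nonneg hh_def)
    also have "\<dots> = ennreal (q a b j r') * ennreal a" using Suc.IH int_hh A by simp
    finally show ?thesis using a0 b0 by (simp add: ennreal_mult q_nonneg mult.commute)
  qed
  have G: "(\<integral>\<^sup>+\<omega>. ennreal (w e s (\<lambda>i. E i \<omega>) j r' * gg e s (E (Suc j) \<omega>)) \<partial>M) = ennreal (b * q a b j r')" for r'
  proof -
    have "(\<integral>\<^sup>+\<omega>. ennreal (w e s (\<lambda>i. E i \<omega>) j r' * gg e s (E (Suc j) \<omega>)) \<partial>M)
       = (\<integral>\<^sup>+\<omega>. w e s (\<lambda>i. E i \<omega>) j r' \<partial>M) * (\<integral>\<^sup>+\<omega>. gg e s (E (Suc j) \<omega>) \<partial>M)"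
      by (rule indep_var_nn_integral[OF W_indep]) (auto simp: w_nonneg gg_nonneg gg_def)
    also have "\<dots> = ennreal (q a b j r') * ennreal b" using Suc.IH int_gg B by simp
    finally show ?thesis using a0 b0 by (simp add: ennreal_mult q_nonneg mult.commute)
  qed
  show ?case
  proof (cases r)
    case 0
    then show ?thesis using H[of 0] by simp
  next
    case (Suc r')
    have "(\<integral>\<^sup>+\<omega>. ennreal (w e s (\<lambda>i. E i \<omega>) (Suc j) r) \<partial>M)
      = (\<integral>\<^sup>+\<omega>. ennreal (w e s (\<lambda>i. E i \<omega>) j r * hh e s (E (Suc j) \<omega>)) + 
                  ennreal (w e s (\<lambda>i. E i \<omega>) j r' * gg e s (E (Suc j) \<omega>)) \<partial>M)"
      unfolding Suc by (intro nn_integral_cong) (simp add: ennreal_plus w_nonneg gg_nonneg hh_nonneg)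
    also have "\<dots> = (\<integral>\<^sup>+\<omega>. ennreal (w e s (\<lambda>i. E i \<omega>) j r * hh e s (E (Suc j) \<omega>)) \<partial>M) +
        (\<integral>\<^sup>+\<omega>. ennreal (w e s (\<lambda>i. E i \<omega>) j r' * gg e s (E (Suc j) \<omega>)) \<partial>M)"
      by (rule nn_integral_add) auto
    also have "\<dots> = ennreal (a * q a b j r + b * q a b j r')"
      unfolding H G using a0 b0 by (simp add: ennreal_plus q_nonneg)
    finally show ?thesis unfolding Suc by simp
  qed
qed

end

lemma q0: "q a b j 0 = a ^ j"
  by (induction j) auto

lemma sums_q:
  assumes a0: "0 \<le> a" and a1: "a < 1" and b0: "0 \<le> b"
  shows "(\<lambda>j. q a b j r) sums (b ^ r / (1 - a) ^ Suc r)"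
proof (induction r)
  case 0
  then show ?case using geometric_sums[of a] a0 a1 by (simp add: q0)
next
  case (Suc r)
  define B where "B = b ^ r / (1 - a) ^ Suc r"
  have IH: "(\<lambda>j. q a b j r) sums B" using Suc B_def by simp
  define d where "d j = q a b j (Suc r)" for j
  have dn: "0 \<le> d j" for j unfolding d_def using a0 b0 by (rule q_nonneg)
  have qn: "0 \<le> q a b j r" for j using a0 b0 by (rule q_nonneg)
  have rec: "(\<Sum>j<Suc N. d j) = a * (\<Sum>j<N. d j) + b * (\<Sum>j<N. q a b j r)" for N
    by (simp add: sum.lessThan_Suc_shift d_def sum.distrib sum_distrib_left del: sum.lessThan_Suc)
  have PB: "(\<Sum>j<N. q a b j r) \<le> B" for N
    using sum_le_suminf[of "\<lambda>j. q a b j r" "{..<N}"] IH qn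
    by (simp add: sums_iff)
  have bound: "(\<Sum>j<N. d j) \<le> b * B / (1 - a)" for N
  proof -
    have "(\<Sum>j<N. d j) \<le> (\<Sum>j<Suc N. d j)" using dn by simp
    also have "\<dots> \<le> a * (\<Sum>j<N. d j) + b * B" unfolding rec using PB[of N] b0 by (simp add: mult_left_mono)
    finally have "(1 - a) * (\<Sum>j<N. d j) \<le> b * B" by (simp add: algebra_simps)
    then show ?thesis using a1 by (simp add: field_simps)
  qed
  have summ: "summable d" by (rule summableI_nonneg_bounded[OF dn bound])
  define L where "L = suminf d"
  have dL: "d sums L" using summ L_def by (simp add: summable_sums)
  have d0: "d 0 = 0" by (simp add: d_def)
  have s1: "(\<lambda>j. d (Suc j)) sums L" using dL d0 sums_Suc_iff[of d L] by simp
  have s2: "(\<lambda>j. a * d j + b * q a b j r) sums (a * L + b * B)"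
    by (intro sums_add sums_mult IH dL)
  have "(\<lambda>j. d (Suc j)) = (\<lambda>j. a * d j + b * q a b j r)" by (rule ext) (simp add: d_def)
  then have "L = a * L + b * B" using s1 s2 sums_unique2 by metis
  then have "L = b * B / (1 - a)" using a1 by (simp add: field_simps)
  then have "L = b ^ Suc r / (1 - a) ^ Suc (Suc r)" unfolding B_def using a1 by (simp add: field_simps)
  moreover have "d = (\<lambda>j. q a b j (Suc r))" by (simp add: d_def fun_eq_iff)
  ultimately show ?case using dL by simp
qed


lemma alg:
  fixes l s X Y :: real
  assumes l: "l > 0" and s: "s \<ge> 0" and X: "X > 0" and XY: "X * Y = 1"
  shows "(l / (l + s) * X) / (1 - l / (l + s) * (1 - X)) = l / (l + s * Y)"
proof -
  have k: "l + s \<noteq> 0" using l s by simp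
  have d: "s + l * X > 0" using l s X by (simp add: add_nonneg_pos)
  have "1 - l / (l + s) * (1 - X) = (s + l * X) / (l + s)" using k by (simp add: field_simps)
  then have "(l / (l + s) * X) / (1 - l / (l + s) * (1 - X)) = (l * X) / (s + l * X)"
    using k d by simp
  also have "\<dots> = (l * X) / ((l + s * Y) * X)" using XY by (simp add: algebra_simps)
  also have "\<dots> = l / (l + s * Y)" using X by simp
  finally show ?thesis .
qed

context ppsetup begin

lemma FTC_exp:
  assumes "0 \<le> s" "0 \<le> c"
  shows "(\<integral>\<^sup>+y. ennreal (l * exp (- (l + s) * y)) * indicator {c..} y \<partial>lborel)
     = ennreal (l / (l + s) * exp (- (l + s) * c))"
proof -
  have k: "l + s > 0" using lpos assms by simp
  have "(\<integral>\<^sup>+y. ennreal (l * exp (- (l + s) * y)) * indicator {c..} y \<partial>lborel)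
      = ennreal (0 - (- (l / (l + s) * exp (- (l + s) * c))))"
  proof (rule nn_integral_FTC_atLeast[where F="\<lambda>y. - (l / (l + s) * exp (- (l + s) * y))"])
    show "(\<lambda>x. l * exp (- (l + s) * x)) \<in> borel_measurable borel" by measurable
    show "DERIV (\<lambda>y. - (l / (l + s) * exp (- (l + s) * y))) x :> l * exp (- (l + s) * x)" for x
    proof -
      have "DERIV (\<lambda>y. - (l / (l + s) * exp (- (l + s) * y))) x :> - (l / (l + s) * (exp (- (l + s) * x) * (- (l + s))))"
        by (intro derivative_eq_intros DERIV_cmult DERIV_minus) (auto intro!: derivative_eq_intros)
      moreover have "- (l / (l + s) * (exp (- (l + s) * x) * (- (l + s)))) = l * exp (- (l + s) * x)"
        using k by (simp add: field_simps)
      ultimately show ?thesis by simp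
    qed
    show "0 \<le> l * exp (- (l + s) * x)" for x using lpos by simp
    show "((\<lambda>y. - (l / (l + s) * exp (- (l + s) * y))) \<longlongrightarrow> 0) at_top"
      using k by real_asymp
  qed
  then show ?thesis by simp
qed

lemma Ag_val:
  assumes "0 \<le> s"
  shows "Ag s = ennreal (l / (l + s) * exp (- (l + s) * e))"
proof -
  have "Ag s = (\<integral>\<^sup>+y. ennreal (l * exp (- (l + s) * y)) * indicator {e..} y \<partial>lborel)"
    unfolding Ag_def
  proof (rule nn_integral_cong_AE)
    show "AE y in lborel. ennreal (exponential_density l y) * ennreal (gg e s y) =
        ennreal (l * exp (- (l + s) * y)) * indicator {e..} y"
      using AE_lborel_singleton[of e]
    proof eventually_elim
      case (elim y)
      then show ?case using epos lpos
        by (auto simp: exponential_density_def gg_def indicator_def ennreal_mult[symmetric]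
             exp_add[symmetric] algebra_simps)
    qed
  qed
  then show ?thesis using FTC_exp[OF assms] epos by simp
qed

lemma Ah_val:
  assumes "0 \<le> s"
  shows "Ah s = ennreal (l / (l + s) * (1 - exp (- (l + s) * e)))"
proof -
  have "Ah s + Ag s = (\<integral>\<^sup>+y. ennreal (exponential_density l y) * ennreal (hh e s y) +
       ennreal (exponential_density l y) * ennreal (gg e s y) \<partial>lborel)"
    unfolding Ah_def Ag_def by (rule nn_integral_add[symmetric]) (auto simp: hh_def gg_def)
  also have "\<dots> = (\<integral>\<^sup>+y. ennreal (l * exp (- (l + s) * y)) * indicator {0..} y \<partial>lborel)"
  proof (intro nn_integral_cong)
    fix y :: real
    have l0: "0 \<le> l" using lpos by simp
    show "ennreal (exponential_density l y) * ennreal (hh e s y) +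
       ennreal (exponential_density l y) * ennreal (gg e s y) = ennreal (l * exp (- (l + s) * y)) * indicator {0..} y"
    proof (cases "y < 0")
      case True then show ?thesis by (simp add: exponential_density_def)
    next
      case False
      have "exponential_density l y * exp (- s * y) = l * exp (- (l + s) * y)"
        using False by (simp add: exponential_density_def mult.assoc exp_add[symmetric] algebra_simps)
      then have "ennreal (exponential_density l y) * ennreal (exp (- s * y)) = ennreal (l * exp (- (l + s) * y))"
        using False l0 by (simp add: ennreal_mult[symmetric] exponential_density_def)
      then show ?thesis using False by (auto simp: hh_def gg_def indicator_def)
    qed
  qed
  also have "\<dots> = ennreal (l / (l + s))" using FTC_exp[OF assms, of 0] by simp
  finally have eq: "Ah s + ennreal (l / (l + s) * exp (- (l + s) * e)) = ennreal (l / (l + s))"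
    using Ag_val[OF assms] by simp
  have "Ah s = ennreal (l / (l + s)) - ennreal (l / (l + s) * exp (- (l + s) * e))"
    using eq[symmetric] by (simp add: ennreal_add_diff_cancel_right)
  also have "\<dots> = ennreal (l / (l + s) - l / (l + s) * exp (- (l + s) * e))"
    using lpos assms by (subst ennreal_minus) auto
  finally show ?thesis by (simp add: algebra_simps)
qed


lemma ratio:
  assumes "0 \<le> s"
  defines "a \<equiv> l / (l + s) * (1 - exp (- (l + s) * e))" and "b \<equiv> l / (l + s) * exp (- (l + s) * e)"
  shows "0 \<le> a" "a < 1" "0 \<le> b" "b / (1 - a) = l / (l + s * exp ((l + s) * e))"
proof -
  have k: "l + s > 0" using lpos assms by simp
  have "0 \<le> (l + s) * e" using k epos by simp
  then have E1: "exp (- (l + s) * e) \<le> 1" by (simp add: algebra_simps)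
  have E0: "exp (- (l + s) * e) > 0" by simp
  have t1: "l / (l + s) \<le> 1" using k assms by simp
  have t0: "l / (l + s) > 0" using k lpos by simp
  show "0 \<le> a" unfolding a_def using E1 t0 by (intro mult_nonneg_nonneg) auto
  have "a \<le> 1 - exp (- (l + s) * e)" unfolding a_def using E1 t1
    by (metis diff_ge_0_iff_ge mult_left_le_one_le t0 less_imp_le)
  then show "a < 1" using E0 by linarith
  show "0 \<le> b" unfolding b_def using t0 by (intro mult_nonneg_nonneg) auto
  have ee: "exp (- (l + s) * e) * exp ((l + s) * e) = 1" by (simp add: exp_add[symmetric] algebra_simps)
  show "b / (1 - a) = l / (l + s * exp ((l + s) * e))"
    unfolding a_def b_def by (rule alg[OF lpos \<open>0 \<le> s\<close> E0 ee])
qed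

lemma RHS_int:
  assumes s0: "0 \<le> s" and n1: "n \<ge> 1"
  shows "(\<integral>\<^sup>+\<omega>. (\<Sum>j. ennreal (w e s (\<lambda>i. E i \<omega>) j (n - 1) * gg e s (E (Suc j) \<omega>))) \<partial>M)
     = ennreal ((l / (l + s * exp ((l + s) * e))) ^ n)"
proof -
  define a where "a = l / (l + s) * (1 - exp (- (l + s) * e))"
  define b where "b = l / (l + s) * exp (- (l + s) * e)"
  note R = ratio[OF s0, folded a_def b_def]
  have A: "Ah s = ennreal a" unfolding a_def by (rule Ah_val[OF s0])
  have B: "Ag s = ennreal b" unfolding b_def by (rule Ag_val[OF s0])
  have G: "(\<integral>\<^sup>+\<omega>. ennreal (w e s (\<lambda>i. E i \<omega>) j r * gg e s (E (Suc j) \<omega>)) \<partial>M) = ennreal (b * q a b j r)" for j r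
  proof -
    have "(\<integral>\<^sup>+\<omega>. ennreal (w e s (\<lambda>i. E i \<omega>) j r * gg e s (E (Suc j) \<omega>)) \<partial>M)
       = (\<integral>\<^sup>+\<omega>. w e s (\<lambda>i. E i \<omega>) j r \<partial>M) * (\<integral>\<^sup>+\<omega>. gg e s (E (Suc j) \<omega>) \<partial>M)"
      by (rule indep_var_nn_integral[OF W_indep]) (auto simp: w_nonneg gg_nonneg gg_def)
    also have "\<dots> = ennreal (q a b j r) * ennreal b" using Q_eq[OF A B R(1) R(3)] int_gg B by simp
    finally show ?thesis using R by (simp add: ennreal_mult q_nonneg mult.commute)
  qed
  have "(\<integral>\<^sup>+\<omega>. (\<Sum>j. ennreal (w e s (\<lambda>i. E i \<omega>) j (n - 1) * gg e s (E (Suc j) \<omega>))) \<partial>M)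
      = (\<Sum>j. \<integral>\<^sup>+\<omega>. ennreal (w e s (\<lambda>i. E i \<omega>) j (n - 1) * gg e s (E (Suc j) \<omega>)) \<partial>M)"
    by (rule nn_integral_suminf) auto
  also have "\<dots> = (\<Sum>j. ennreal (b * q a b j (n - 1)))" unfolding G ..
  also have "\<dots> = ennreal (b * (b ^ (n - 1) / (1 - a) ^ Suc (n - 1)))"
  proof (rule suminf_ennreal_eq)
    show "0 \<le> b * q a b j (n - 1)" for j using R q_nonneg[OF R(1) R(3)] by simp
    show "(\<lambda>j. b * q a b j (n - 1)) sums (b * (b ^ (n - 1) / (1 - a) ^ Suc (n - 1)))"
      by (rule sums_mult[OF sums_q]) (use R in auto)
  qed
  also have "b * (b ^ (n - 1) / (1 - a) ^ Suc (n - 1)) = (b / (1 - a)) ^ n"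
    using n1 by (cases n) (auto simp: power_divide)
  finally show ?thesis using R(4) by simp
qed


lemma pp_eq: "pp_points E \<omega> = (\<lambda>k. \<Sum>i<k. E i \<omega>)"
  by (rule ext) (simp add: pp_points_def)

lemma RHS_meas[measurable]:
  "(\<lambda>\<omega>. (\<Sum>j. ennreal (w e s (\<lambda>i. E i \<omega>) j r * gg e s (E (Suc j) \<omega>)))) \<in> borel_measurable M"
  by measurable

lemma RHS_good:
  assumes n1: "n \<ge> 1" and P: "card {i\<in>{1..j0}. e < E i \<omega>} = n - 1" "e < E (Suc j0) \<omega>"
  shows "(\<Sum>j. ennreal (w e s (\<lambda>i. E i \<omega>) j (n - 1) * gg e s (E (Suc j) \<omega>)))
     = ennreal (exp (- s * (\<Sum>i\<in>{1..Suc j0}. E i \<omega>)))"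
proof -
  have "(\<Sum>j. ennreal (w e s (\<lambda>i. E i \<omega>) j (n - 1) * gg e s (E (Suc j) \<omega>)))
      = (\<Sum>j\<in>{j0}. ennreal (w e s (\<lambda>i. E i \<omega>) j (n - 1) * gg e s (E (Suc j) \<omega>)))"
  proof (rule suminf_finite)
    fix j assume "j \<notin> {j0}"
    then have "j \<noteq> j0" by simp
    then have "\<not> (card {i\<in>{1..j}. e < E i \<omega>} = n - 1 \<and> e < E (Suc j) \<omega>)"
      using U_unique[where x="\<lambda>i. E i \<omega>" and j=j and j'=j0 and n=n and e=e] n1 P by auto
    then show "ennreal (w e s (\<lambda>i. E i \<omega>) j (n - 1) * gg e s (E (Suc j) \<omega>)) = 0"
      by (auto simp: w_closed gg_def)
  qed simp
  also have "\<dots> = ennreal (exp (- s * (\<Sum>i\<in>{1..Suc j0}. E i \<omega>)))"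
    using P by (simp add: w_closed gg_def exp_add[symmetric] algebra_simps)
  finally show ?thesis .
qed

lemma RHS_bad:
  assumes "\<not> (\<exists>j. card {i\<in>{1..j}. e < E i \<omega>} = n - 1 \<and> e < E (Suc j) \<omega>)"
  shows "(\<Sum>j. ennreal (w e s (\<lambda>i. E i \<omega>) j (n - 1) * gg e s (E (Suc j) \<omega>))) = 0"
proof -
  have "ennreal (w e s (\<lambda>i. E i \<omega>) j (n - 1) * gg e s (E (Suc j) \<omega>)) = 0" for j
    using assms by (auto simp: w_closed gg_def)
  then show ?thesis by simp
qed

lemma main_pos:
  assumes s0: "0 \<le> s" and n1: "n \<ge> 1"
  shows "expectation (\<lambda>\<omega>. exp (- s * cluster_U (pp_points E \<omega>) e n))
     = l ^ n / (l + s * exp ((l + s) * e)) ^ n"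
proof -
  define P where "P \<omega> \<longleftrightarrow> (\<exists>j. card {i\<in>{1..j}. e < E i \<omega>} = n - 1 \<and> e < E (Suc j) \<omega>)" for \<omega>
  define R where "R s' \<omega> = (\<Sum>j. ennreal (w e s' (\<lambda>i. E i \<omega>) j (n - 1) * gg e s' (E (Suc j) \<omega>)))" for s' \<omega>
  define c0 where "c0 = (LEAST x. x \<in> ({}::nat set))"
  have Pw: "P \<omega> \<longleftrightarrow> (\<exists>j. w e 0 (\<lambda>i. E i \<omega>) j (n - 1) = 1 \<and> e < E (Suc j) \<omega>)" for \<omega>
    unfolding P_def by (auto simp: w_closed)
  have Pset: "{\<omega>\<in>space M. P \<omega>} \<in> sets M"
    unfolding Pw by measurable
  have R0: "R 0 \<omega> = indicator {\<omega>\<in>space M. P \<omega>} \<omega>" if "\<omega> \<in> space M" for \<omega>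
  proof (cases "P \<omega>")
    case True
    then obtain j0 where "card {i\<in>{1..j0}. e < E i \<omega>} = n - 1" "e < E (Suc j0) \<omega>" unfolding P_def by blast
    from RHS_good[OF n1 this, of 0] show ?thesis using True that by (simp add: R_def)
  next
    case False
    then show ?thesis using RHS_bad[of \<omega> n 0] by (simp add: R_def P_def)
  qed
  have "emeasure M {\<omega>\<in>space M. P \<omega>} = (\<integral>\<^sup>+\<omega>. R 0 \<omega> \<partial>M)"
    using Pset by (simp add: R0 nn_integral_cong[of M "R 0" "indicator {\<omega>\<in>space M. P \<omega>}"])
  also have "\<dots> = 1" unfolding R_def using RHS_int[of 0 n] n1 lpos by simp
  finally have "prob {\<omega>\<in>space M. P \<omega>} = 1" by (simp add: emeasure_eq_measure)
  then have AEP: "AE \<omega> in M. P \<omega>" using AE_prob_1 by force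
  define F where "F \<omega> = exp (- s * cluster_U (pp_points E \<omega>) e n)" for \<omega>
  have Fgood: "ennreal (F \<omega>) = R s \<omega>" if "P \<omega>" for \<omega>
  proof -
    from that obtain j0 where j0: "card {i\<in>{1..j0}. e < E i \<omega>} = n - 1" "e < E (Suc j0) \<omega>" unfolding P_def by blast
    show ?thesis unfolding F_def R_def pp_eq RHS_good[OF n1 j0] U_good[OF n1 j0] ..
  qed
  have Fform: "F \<omega> = (if P \<omega> then enn2real (R s \<omega>) else exp (- s * ((\<Sum>i<c0. E i \<omega>) - E 0 \<omega>)))" for \<omega>
  proof (cases "P \<omega>")
    case True
    then show ?thesis using Fgood[OF True] by (metis enn2real_ennreal exp_ge_zero F_def)
  next
    case False
    have "F \<omega> = exp (- s * ((\<Sum>i<c0. E i \<omega>) - E 0 \<omega>))"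
      unfolding F_def pp_eq c0_def using U_bad[OF n1, of e "\<lambda>i. E i \<omega>"] False
      by (simp add: P_def)
    then show ?thesis using False by simp
  qed
  have Fm: "F \<in> borel_measurable M"
  proof -
    have "(\<lambda>\<omega>. if P \<omega> then enn2real (R s \<omega>) else exp (- s * ((\<Sum>i<c0. E i \<omega>) - E 0 \<omega>))) \<in> borel_measurable M"
      unfolding Pw R_def by measurable
    then show ?thesis unfolding Fform[abs_def] .
  qed
  have "expectation F = enn2real (\<integral>\<^sup>+\<omega>. ennreal (F \<omega>) \<partial>M)"
    by (rule integral_eq_nn_integral[OF Fm]) (simp add: F_def)
  also have "(\<integral>\<^sup>+\<omega>. ennreal (F \<omega>) \<partial>M) = (\<integral>\<^sup>+\<omega>. R s \<omega> \<partial>M)"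
    by (rule nn_integral_cong_AE) (use AEP in \<open>auto elim!: eventually_mono simp: Fgood\<close>)
  also have "\<dots> = ennreal ((l / (l + s * exp ((l + s) * e))) ^ n)"
    unfolding R_def by (rule RHS_int[OF s0 n1])
  finally show ?thesis unfolding F_def
    using lpos s0 by (simp add: power_divide)
qed

end


theorem corollary2:
  fixes M :: "'a measure" and E :: "nat \<Rightarrow> 'a \<Rightarrow> real"
    and l \<epsilon> s :: real and n :: nat
  assumes "prob_space M"
    and "l > 0"
    and "poisson_interarrivals M l E"
    and "\<epsilon> > 0"
    and "s \<ge> 0"
  shows "prob_space.expectation M
           (\<lambda>\<omega>. exp (- s * cluster_U (pp_points E \<omega>) \<epsilon> n))
         = l ^ n / (l + s * exp ((l + s) * \<epsilon>)) ^ n"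
proof -
  interpret p: ppsetup M l \<epsilon> E
    by (intro ppsetup.intro ppsetup_axioms.intro) (use assms in auto)
  show ?thesis
  proof (cases "n = 0")
    case True
    have "cluster_U X \<epsilon> 0 = 0" for X by (simp add: cluster_U_def)
    then show ?thesis using True p.prob_space by simp
  next
    case False
    then show ?thesis using p.main_pos[OF assms(5)] by simp
  qed
qed

end
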